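(* Let $q$ be a prime power and $\lambda\in(0,1)$ be such that $\lambda q$ is a positive integer. Then there exists a coded caching scheme with linear subpacketization $F=K$, where the number of users satisfies $K\le \frac{q^{2\lambda^2q^2}}{(\lambda q)!}$, with cache fraction $\frac{M}{N}\le\lambda$ and global caching gain $\gamma\ge\frac{4^{\lambda q}}{2\sqrt{\lambda q}}$ (the rate being $R=K(1-\frac{M}{N})/\gamma$).
   Context: Coded caching setup: a server holds $N$ files $W_1,\dots,W_N$ and is connected by an error-free broadcast link to $K$ users, each having a cache able to store $M$ files; it is assumed throughout that $N\ge K$. Each file is split into $F$ equal-size subfiles ($F$ is the subpacketization). Caching is done before demands are known and is symmetric: for every user and subfile index $f$, the user caches the $f$-th subfile of either all files or none. In the delivery phase every user demands one file and the server broadcasts transmissions, each of the size of one subfile, so that every user can recover its demanded file from its cache and the transmissions, for every demand vector. The rate $R$ is the number of transmissions divided by $F$, and the global caching gain is $\gamma=K(1-M/N)/R$. *)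

theory Defs
  imports Complex_Main "HOL-Number_Theory.Number_Theory"
begin

(* Files are indexed by 0..<N, users by 0..<K, subfile indices by 0..<F.
   A library is W :: nat => nat => 'v, W n f = f-th subfile of file n.
   Symmetric placement: user k caches subfile f of every file iff f \<in> Z k.
   A transmission is a function of the library with value of the size of one
   subfile (a 'v). *)

definition delivers ::
  "nat \<Rightarrow> nat \<Rightarrow> nat \<Rightarrow> (nat \<Rightarrow> nat set) \<Rightarrow> (nat \<Rightarrow> nat)
     \<Rightarrow> ((nat \<Rightarrow> nat \<Rightarrow> 'v) \<Rightarrow> 'v) list \<Rightarrow> bool" where
  "delivers N K F Z d tr \<longleftrightarrow>
     (\<forall>t\<in>set tr. \<forall>W W'. (\<forall>n<N. \<forall>f<F. W n f = W' n f) \<longrightarrow> t W = t W') \<and>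
     (\<forall>k<K. \<forall>W W'.
        (\<forall>n<N. \<forall>f\<in>Z k. W n f = W' n f) \<and> (\<forall>t\<in>set tr. t W = t W')
        \<longrightarrow> (\<forall>f<F. W (d k) f = W' (d k) f))"

(* A coded caching scheme with N files, K users, cache size M (in files),
   subpacketization F, placement Z, using at most T transmissions for every
   demand vector; rate R = T / F. *)
definition coded_caching_scheme ::
  "'v itself \<Rightarrow> nat \<Rightarrow> nat \<Rightarrow> real \<Rightarrow> nat \<Rightarrow> (nat \<Rightarrow> nat set) \<Rightarrow> nat \<Rightarrow> bool" where
  "coded_caching_scheme _ N K M F Z T \<longleftrightarrow>
     F > 0 \<and>
     (\<forall>k<K. Z k \<subseteq> {..<F} \<and> real N * real (card (Z k)) \<le> M * real F) \<and>
     (\<forall>d. (\<forall>k<K. d k < N) \<longrightarrow>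
        (\<exists>tr :: ((nat \<Rightarrow> nat \<Rightarrow> 'v) \<Rightarrow> 'v) list.
            length tr \<le> T \<and> delivers N K F Z d tr))"

end

theory Submission
  imports Defs "HOL-Library.FuncSet"
begin

lemma deliv:
  fixes C :: "'g \<Rightarrow> (nat \<times> nat) set" and Ps :: "'g list"
  assumes dN: "\<forall>k<K. d k < N"
  and fin: "\<forall>P\<in>set Ps. finite (C P) \<and> C P \<subseteq> {..<K} \<times> {..<F}"
  and cov: "\<forall>k<K. \<forall>f<F. f \<notin> Z k \<longrightarrow> (\<exists>P\<in>set Ps. (k,f) \<in> C P \<and> (\<forall>c\<in>C P. c \<noteq> (k,f) \<longrightarrow> snd c \<in> Z k))"
  shows "delivers N K F Z d (map (\<lambda>P (W::nat\<Rightarrow>nat\<Rightarrow>'v::ab_group_add). \<Sum>c\<in>C P. W (d (fst c)) (snd c)) Ps)"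
  unfolding delivers_def
proof (intro conjI ballI allI impI)
  fix t and W W' :: "nat\<Rightarrow>nat\<Rightarrow>'v"
  assume t: "t \<in> set (map (\<lambda>P (W::nat\<Rightarrow>nat\<Rightarrow>'v::ab_group_add). \<Sum>c\<in>C P. W (d (fst c)) (snd c)) Ps)"
    and H: "\<forall>n<N. \<forall>f<F. W n f = W' n f"
  then obtain P where P: "P \<in> set Ps" and tP: "t = (\<lambda>W. \<Sum>c\<in>C P. W (d (fst c)) (snd c))" by auto
  show "t W = t W'" unfolding tP
  proof (rule sum.cong)
    fix c assume "c \<in> C P"
    then have "fst c < K \<and> snd c < F" using fin P by (cases c) auto
    then show "W (d (fst c)) (snd c) = W' (d (fst c)) (snd c)" using H dN by auto
  qed simp
next
  fix k f and W W' :: "nat\<Rightarrow>nat\<Rightarrow>'v"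
  assume k: "k < K" and H: "(\<forall>n<N. \<forall>f\<in>Z k. W n f = W' n f) \<and>
      (\<forall>t\<in>set (map (\<lambda>P (W::nat\<Rightarrow>nat\<Rightarrow>'v::ab_group_add). \<Sum>c\<in>C P. W (d (fst c)) (snd c)) Ps). t W = t W')"
    and f: "f < F"
  show "W (d k) f = W' (d k) f"
  proof (cases "f \<in> Z k")
    case True then show ?thesis using H dN k by auto
  next
    case False
    then obtain P where P: "P \<in> set Ps" and kf: "(k,f) \<in> C P"
      and oth: "\<forall>c\<in>C P. c \<noteq> (k,f) \<longrightarrow> snd c \<in> Z k" using cov k f by blast
    have finP: "finite (C P)" and sub: "C P \<subseteq> {..<K} \<times> {..<F}" using fin P by auto
    define g where "g = (\<lambda>(W::nat\<Rightarrow>nat\<Rightarrow>'v) c. W (d (fst c)) (snd c))"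
    have eq: "sum (g W) (C P) = sum (g W') (C P)" using H P unfolding g_def by auto
    have rest: "sum (g W) (C P - {(k,f)}) = sum (g W') (C P - {(k,f)})"
    proof (rule sum.cong)
      fix c assume c: "c \<in> C P - {(k,f)}"
      then have "snd c \<in> Z k \<and> fst c < K" using oth sub by (cases c) auto
      then show "g W c = g W' c" unfolding g_def using H dN by auto
    qed simp
    have "sum (g W) (C P) = g W (k,f) + sum (g W) (C P - {(k,f)})"
      by (rule sum.remove[OF finP kf])
    moreover have "sum (g W') (C P) = g W' (k,f) + sum (g W') (C P - {(k,f)})"
      by (rule sum.remove[OF finP kf])
    ultimately have "g W (k,f) = g W' (k,f)" using eq rest by simp
    then show ?thesis unfolding g_def by simp
  qed
qed


lemma scheme:
  fixes n m :: nat assumes m1: "m \<ge> 1"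
  shows "\<exists>Z T. (\<forall>N\<ge>m^n. coded_caching_scheme TYPE('v::ab_group_add) N (m^n)
            ((1 - ((real m - 1)/real m)^n) * real N) (m^n) Z T)
         \<and> real T = (real m * (real m - 1)/2)^n"
proof -
  define V where "V = PiE {..<n} (\<lambda>_. {..<m})"
  have finV: "finite V" unfolding V_def by (simp add: finite_PiE)
  have cardV: "card V = m^n" unfolding V_def by (simp add: card_PiE)
  define K where "K = m^n"
  obtain e where e: "bij_betw e {0..<K} V" using ex_bij_betw_nat_finite[OF finV] cardV K_def by auto
  have eV: "\<And>k. k < K \<Longrightarrow> e k \<in> V" using e by (auto simp: bij_betw_def)
  have einj: "\<And>k f. k < K \<Longrightarrow> f < K \<Longrightarrow> e k = e f \<Longrightarrow> k = f"
    using e by (auto simp: bij_betw_def inj_on_def)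
  define Z where "Z = (\<lambda>k. {f. f < K \<and> (\<exists>i<n. e f i = e k i)})"
  define B where "B = {S. S \<subseteq> {..<m} \<and> card S = 2}"
  define G where "G = PiE {..<n} (\<lambda>_. B)"
  have finG: "finite G" unfolding G_def B_def by (simp add: finite_PiE)
  obtain Ps where Ps: "set Ps = G" "distinct Ps" using finite_distinct_list[OF finG] by blast
  define T where "T = card G"
  have cardB: "card B = m choose 2" unfolding B_def using n_subsets[of "{..<m}" 2] by simp
  have cardG: "card G = (m choose 2)^n" unfolding G_def by (simp add: card_PiE cardB)
  have T: "real T = (real m * (real m - 1)/2)^n"
  proof -
    have "real (m choose 2) = real m * (real m - 1)/2"
    proof -
      have ev: "even (m * (m - 1))" by auto
      have "real (m choose 2) = real (m * (m - 1) div 2)" by (simp add: choose_two)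
      also have "\<dots> = real (m * (m-1)) / 2" using ev by (simp add: real_of_nat_div)
      also have "\<dots> = real m * (real m - 1)/2" using m1 by (simp add: of_nat_diff)
      finally show ?thesis .
    qed
    then show ?thesis unfolding T_def cardG by (simp only: of_nat_power)
  qed
  define C where "C = (\<lambda>P. {(k,f). k < K \<and> f < K \<and> (\<forall>i<n. e k i \<noteq> e f i \<and> {e k i, e f i} = P i)})"
  define \<mu> where "\<mu> = 1 - ((real m - 1)/real m)^n"
  have cardZ: "real (card (Z k)) = \<mu> * real K" if k: "k < K" for k
  proof -
    define NZ where "NZ = {f. f < K \<and> (\<forall>i<n. e f i \<noteq> e k i)}"
    have ZNZ: "Z k = {..<K} - NZ" unfolding Z_def NZ_def by auto
    have "e ` NZ = PiE {..<n} (\<lambda>i. {..<m} - {e k i})"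
    proof
      show "e ` NZ \<subseteq> PiE {..<n} (\<lambda>i. {..<m} - {e k i})"
        using eV unfolding NZ_def V_def by (fastforce simp: PiE_iff extensional_def)
      show "PiE {..<n} (\<lambda>i. {..<m} - {e k i}) \<subseteq> e ` NZ"
      proof
        fix v assume v: "v \<in> PiE {..<n} (\<lambda>i. {..<m} - {e k i})"
        then have "v \<in> V" unfolding V_def by (auto simp: PiE_iff)
        then obtain f where f: "f \<in> {0..<K}" "e f = v" using e by (auto simp: bij_betw_def)
        then show "v \<in> e ` NZ" using v unfolding NZ_def by (auto simp: PiE_iff)
      qed
    qed
    moreover have "inj_on e NZ" using e unfolding NZ_def bij_betw_def by (auto intro: inj_on_subset)
    ultimately have "card NZ = card (PiE {..<n} (\<lambda>i. {..<m} - {e k i}))" by (metis card_image)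
    also have "\<dots> = (m - 1)^n"
    proof -
      have "\<And>i. i < n \<Longrightarrow> card ({..<m} - {e k i}) = m - 1"
        using eV[OF k] unfolding V_def by (auto simp: PiE_iff)
      then show ?thesis by (simp add: card_PiE)
    qed
    finally have cNZ: "card NZ = (m-1)^n" .
    have "NZ \<subseteq> {..<K}" unfolding NZ_def by auto
    then have "card (Z k) = K - (m-1)^n" unfolding ZNZ using cNZ by (simp add: card_Diff_subset finite_subset)
    moreover have "(m-1)^n \<le> K" unfolding K_def by (simp add: power_mono)
    ultimately have "real (card (Z k)) = real K - real (m-1)^n" by (simp add: of_nat_diff)
    also have "\<dots> = \<mu> * real K" unfolding \<mu>_def K_def using m1
      by (simp add: power_divide of_nat_diff field_simps)
    finally show ?thesis .
  qed
  have main: "coded_caching_scheme TYPE('v::ab_group_add) N K (\<mu> * real N) K Z T" for N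
    unfolding coded_caching_scheme_def
  proof (intro conjI allI impI)
    show "0 < K" unfolding K_def using m1 by simp
  next
    fix k assume k: "k < K"
    show "Z k \<subseteq> {..<K}" unfolding Z_def by auto
    show "real N * real (card (Z k)) \<le> \<mu> * real N * real K" using cardZ[OF k] by simp
  next
    fix d :: "nat \<Rightarrow> nat" assume dN: "\<forall>k<K. d k < N"
    let ?tr = "map (\<lambda>P (W::nat\<Rightarrow>nat\<Rightarrow>'v). \<Sum>c\<in>C P. W (d (fst c)) (snd c)) Ps"
    have "length ?tr \<le> T" unfolding T_def using Ps distinct_card by fastforce
    moreover have "delivers N K K Z d ?tr"
    proof (rule deliv[OF dN])
      show "\<forall>P\<in>set Ps. finite (C P) \<and> C P \<subseteq> {..<K} \<times> {..<K}"
      proof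
        fix P
        have "C P \<subseteq> {..<K} \<times> {..<K}" unfolding C_def by auto
        then show "finite (C P) \<and> C P \<subseteq> {..<K} \<times> {..<K}" by (auto intro: finite_subset)
      qed
      show "\<forall>k<K. \<forall>f<K. f \<notin> Z k \<longrightarrow> (\<exists>P\<in>set Ps. (k,f) \<in> C P \<and> (\<forall>c\<in>C P. c \<noteq> (k,f) \<longrightarrow> snd c \<in> Z k))"
      proof (intro allI impI)
        fix k f assume k: "k < K" and f: "f < K" and fZ: "f \<notin> Z k"
        have ne: "\<forall>i<n. e k i \<noteq> e f i" using fZ f unfolding Z_def by auto
        define P where "P = (\<lambda>i\<in>{..<n}. {e k i, e f i})"
        have "P \<in> G" unfolding G_def B_def P_def using eV[OF k] eV[OF f] ne
          unfolding V_def by (auto simp: PiE_iff)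
        moreover have kf: "(k,f) \<in> C P" unfolding C_def P_def using k f ne by auto
        moreover have "\<forall>c\<in>C P. c \<noteq> (k,f) \<longrightarrow> snd c \<in> Z k"
        proof (intro ballI impI)
          fix c assume c: "c \<in> C P" and cne: "c \<noteq> (k,f)"
          obtain k' f' where cc: "c = (k',f')" by (cases c)
          have k': "k' < K" and f': "f' < K" and cp: "\<forall>i<n. e k' i \<noteq> e f' i \<and> {e k' i, e f' i} = {e k i, e f i}"
            using c unfolding cc C_def P_def by auto
          show "snd c \<in> Z k"
          proof (cases "\<forall>i<n. e k' i = e k i")
            case True
            then have "\<forall>i<n. e f' i = e f i" using cp by (metis doubleton_eq_iff)
            then have "e f' = e f" using eV[OF f] eV[OF f'] unfolding V_def
              by (intro ext) (metis PiE_arb lessThan_iff)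
            then have "f' = f" using einj f f' by blast
            moreover have "e k' = e k" using True eV[OF k] eV[OF k'] unfolding V_def
              by (intro ext) (metis PiE_arb lessThan_iff)
            then have "k' = k" using einj k k' by blast
            ultimately show ?thesis using cne cc by simp
          next
            case False
            then obtain i where i: "i < n" "e k' i \<noteq> e k i" by blast
            then have "e f' i = e k i" using cp by (metis doubleton_eq_iff)
            then show ?thesis unfolding cc Z_def using f' i by auto
          qed
        qed
        ultimately show "\<exists>P\<in>set Ps. (k,f) \<in> C P \<and> (\<forall>c\<in>C P. c \<noteq> (k,f) \<longrightarrow> snd c \<in> Z k)"
          using Ps by blast
      qed
    qed
    ultimately show "\<exists>tr :: ((nat \<Rightarrow> nat \<Rightarrow> 'v) \<Rightarrow> 'v) list. length tr \<le> T \<and> delivers N K K Z d tr"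
      by blast
  qed
  show ?thesis using main T unfolding K_def \<mu>_def by blast
qed


lemma fact_le_pow: "(a::nat) < q \<Longrightarrow> fact a \<le> q^(a-1)"
proof (induction a)
  case 0 then show ?case by simp
next
  case (Suc a)
  show ?case
  proof (cases "a = 0")
    case True then show ?thesis by simp
  next
    case False
    have "fact (Suc a) = Suc a * fact a" by simp
    also have "\<dots> \<le> q * q^(a-1)" using Suc by (intro mult_mono) auto
    also have "\<dots> = q^(Suc a - 1)" using False by (cases a) auto
    finally show ?thesis .
  qed
qed

theorem corollary2:
  fixes q a :: nat and lam :: real
  assumes "primepow q"
    and "0 < lam" and "lam < 1"
    and "lam * real q = real a" and "a > 0"
  shows "\<exists>K Z T \<mu>.
     1 \<le> K \<and>
     real K \<le> real q powr (2 * lam^2 * (real q)^2) / fact a \<and>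
     0 \<le> \<mu> \<and> \<mu> \<le> lam \<and>
     (\<forall>N\<ge>K. coded_caching_scheme TYPE('v::ab_group_add) N K (\<mu> * real N) K Z T) \<and>
     real K * (1 - \<mu>) / (real T / real K) \<ge> 4 powr (lam * real q) / (2 * sqrt (lam * real q))"
proof -
  have q1: "q > 1" using assms(1) primepow_gt_Suc_0 by fastforce
  have lamq: "lam = real a / real q" using assms(4) q1 by (simp add: field_simps)
  have aq: "a < q"
  proof -
    have "real a < real q" using assms(3,4) q1 by (simp add: lamq field_simps)
    then show ?thesis by simp
  qed
  define n where "n = 2*a - 1"
  define m where "m = 2*q"
  have m2: "m \<ge> 2" unfolding m_def using q1 by simp
  obtain Z T where ZT: "\<forall>N\<ge>m^n. coded_caching_scheme TYPE('v::ab_group_add) N (m^n)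
            ((1 - ((real m - 1)/real m)^n) * real N) (m^n) Z T"
     and T: "real T = (real m * (real m - 1)/2)^n"
    using scheme[of m n] m2 by auto
  define \<mu> where "\<mu> = 1 - ((real m - 1)/real m)^n"
  have r: "0 \<le> (real m - 1)/real m" "(real m - 1)/real m \<le> 1" using m2 by auto
  have mu0: "0 \<le> \<mu>" unfolding \<mu>_def using r by (simp add: power_le_one)
  have mulam: "\<mu> \<le> lam"
  proof -
    have "1 + real n * (- 1/real m) \<le> (1 + (- 1/real m))^n"
      by (rule Bernoulli_inequality) (use m2 in simp)
    moreover have "1 + (- 1/real m) = (real m - 1)/real m" using m2 by (simp add: field_simps)
    ultimately have "\<mu> \<le> real n / real m" unfolding \<mu>_def by simp
    also have "\<dots> \<le> lam" unfolding lamq n_def m_def using q1 assms(5)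
      by (simp add: field_simps of_nat_diff)
    finally show ?thesis .
  qed
  have Kbound: "real (m^n) \<le> real q powr (2 * lam^2 * (real q)^2) / fact a"
  proof -
    have e: "2 * lam^2 * (real q)^2 = real (2*a^2)" using assms(4) by (simp add: power_mult_distrib[symmetric])
    have "real q powr (2 * lam^2 * (real q)^2) = real (q^(2*a^2))"
      unfolding e using q1 powr_realpow[of "real q" "2*a^2"] by simp
    moreover have "m^n * fact a \<le> q^(2*a^2)"
    proof -
      have "m^n \<le> (q^2)^n" unfolding m_def using q1 by (intro power_mono) (auto simp: power2_eq_square)
      moreover have "fact a \<le> q^(a-1)" using fact_le_pow[OF aq] .
      ultimately have "m^n * fact a \<le> (q^2)^n * q^(a-1)" by (intro mult_mono) auto
      also have "\<dots> = q^(2*n + (a-1))" by (simp add: power_mult[symmetric] power_add)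
      also have "\<dots> \<le> q^(2*a^2)"
      proof (rule power_increasing)
        show "2*n + (a-1) \<le> 2*a^2" unfolding n_def using assms(5)
          by (cases a; cases "a - 1") (auto simp: power2_eq_square algebra_simps)
      qed (use q1 in simp)
      finally show ?thesis .
    qed
    then have "real (m^n) * fact a \<le> real (q^(2*a^2))"
      by (metis of_nat_fact of_nat_le_iff of_nat_mult)
    ultimately show ?thesis
      by (simp add: le_divide_eq)
  qed
  have gain: "real (m^n) * (1 - \<mu>) / (real T / real (m^n)) = 2^n"
  proof -
    have x0: "real m > 1" using m2 by simp
    have a1: "real (m^n) * (1 - \<mu>) = (real m - 1)^n"
      unfolding \<mu>_def using x0 by (simp add: power_divide)
    have a2: "real T = real m^n * (real m - 1)^n / 2^n"
      unfolding T by (simp add: power_divide power_mult_distrib)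
    have "(real m - 1)^n / (real m^n * (real m - 1)^n / 2^n / real m^n) = 2^n"
      using x0 by (simp add: field_simps)
    then show ?thesis using a1 a2 by simp
  qed
  have g2: "4 powr (lam * real q) / (2 * sqrt (lam * real q)) \<le> 2^n"
  proof -
    have "4 powr (lam * real q) = 4^a" using assms(4) by (simp add: powr_realpow)
    also have "\<dots> = (2::real)^(2*a)" by (simp add: power_mult)
    also have "2*a = Suc n" unfolding n_def using assms(5) by simp
    also have "(2::real)^(Suc n) = 2 * 2^n" by simp
    finally have "4 powr (lam * real q) = 2 * 2^n" .
    moreover have "1 \<le> sqrt (lam * real q)" using assms(4,5) by simp
    moreover have "(2::real) * 2^n \<le> 2 * 2^n * sqrt (lam * real q)"
      using \<open>1 \<le> sqrt (lam * real q)\<close> by (simp add: mult_le_cancel_left1)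
    ultimately show ?thesis by (simp add: divide_le_eq)
  qed
  show ?thesis
    apply (rule exI[of _ "m^n"], rule exI[of _ Z], rule exI[of _ T], rule exI[of _ \<mu>])
    using ZT Kbound mu0 mulam gain g2 m2 unfolding \<mu>_def by auto
qed

end
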